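(* Let $\rho_A,\rho_B\in\mathcal{P}(\mathcal{X})$ with $\mathcal{W}(\rho_A,\rho_B)<\infty$, and let $\rho:[0,1]\to\mathbb{R}^{\mathcal{X}}$ and $m:[0,1]\to\mathbb{R}^{\mathcal{X}\times\mathcal{X}}$ be measurable and optimal, i.e. $\mathcal{E}(\rho,m)=\inf\mathcal{E}=\mathcal{W}(\rho_A,\rho_B)^2$. Then for every $(x,y)\in\mathcal{S}:=\{(x,y)\in\mathcal{X}^2: Q(x,y)>0\}$ one has $m(t,x,y)=-m(t,y,x)$ for almost every $t\in[0,1]$.
   Context: Let $\mathcal{X}$ be a finite set and $Q:\mathcal{X}\times\mathcal{X}\to[0,\infty)$ with $Q(x,x)=0$, the transition rate matrix of an irreducible continuous-time Markov chain which is reversible with respect to its unique stationary distribution $\pi:\mathcal{X}\to(0,1]$, $\sum_x\pi(x)=1$, i.e. $\pi(x)Q(x,y)=\pi(y)Q(y,x)$ for all $x,y$. Let $\mathcal{P}(\mathcal{X})=\{\rho:\mathcal{X}\to[0,\infty):\sum_x\pi(x)\rho(x)=1\}$. Inner products: $\langle\phi,\psi\rangle_\pi=\sum_x\phi(x)\psi(x)\pi(x)$ on $\mathbb{R}^{\mathcal{X}}$, $\langle\Phi,\Psi\rangle_Q=\frac12\sum_{x,y}\Phi(x,y)\Psi(x,y)Q(x,y)\pi(x)$ on $\mathbb{R}^{\mathcal{X}\times\mathcal{X}}$. Discrete gradient $(\nabla_{\mathcal{X}}\psi)(x,y)=\psi(x)-\psi(y)$. An averaging function $\theta:[0,\infty)^2\to[0,\infty)$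 is fixed which is continuous, concave, 1-homogeneous, symmetric, $C^\infty$ on $(0,\infty)^2$, with $\theta(0,s)=\theta(s,0)=0$, $\theta(s,s)=s$, $\theta(s,t)>0$ for $s,t>0$, and $s\mapsto\theta(t,s)$ nondecreasing for each $t$; it is extended by $\theta(s,t)=-\infty$ if $\min\{s,t\}<0$. Define $\alpha:\mathbb{R}^3\to\mathbb{R}\cup\{\infty\}$ by $\alpha(s,t,m)=m^2/\theta(s,t)$ if $\theta(s,t)>0$, $\alpha=0$ if $\theta(s,t)=0$ and $m=0$, and $\alpha=+\infty$ otherwise. The action of measurable $\rho:[0,1]\to\mathbb{R}^{\mathcal{X}}$, $m:[0,1]\to\mathbb{R}^{\mathcal{X}\times\mathcal{X}}$ is $\mathcal{A}(\rho,m)=\frac12\int_0^1\sum_{x,y}\alpha(\rho(t,x),\rho(t,y),m(t,x,y))Q(x,y)\pi(x)\,dt$. The set $\mathcal{CE}(\rho_A,\rho_B)$ consists of all measurable pairs $(\rho,m)$ with $\int_0^1\langle\partial_t\varphi(t,\cdot),\rho(t,\cdot)\rangle_\pi+\langle\nabla_{\mathcal{X}}\varphi(t,\cdot),m(t,\cdot)\rangle_Q\,dt=\langle\varphi(1,\cdot),\rho_B\rangle_\pi-\langle\varphi(0,\cdot),\rho_A\rangle_\pi$ for all $\varphi\in C^1([0,1],\mathbb{R}^{\mathcal{X}})$. The energy is $\mathcal{E}(\rho,m)=\mathcal{A}(\rho,m)$ if $(\rho,m)\in\mathcal{CE}(\rho_A,\rho_B)$ and $+\infty$ otherwise, and $\mathcal{W}(\rho_A,\rho_B)=\sqrt{\inf\mathcal{E}}$.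 *)

theory Defs
  imports "HOL-Analysis.Analysis"
begin

definition markov_setting :: "('x::finite \<Rightarrow> 'x \<Rightarrow> real) \<Rightarrow> ('x \<Rightarrow> real) \<Rightarrow> bool" where
  "markov_setting Q \<pi> \<longleftrightarrow>
     (\<forall>x y. Q x y \<ge> 0) \<and> (\<forall>x. Q x x = 0) \<and>
     (\<forall>x y. (x, y) \<in> {(a, b). Q a b > 0}\<^sup>+) \<and>
     (\<forall>x. \<pi> x > 0) \<and> (\<Sum>x\<in>UNIV. \<pi> x) = 1 \<and>
     (\<forall>y. (\<Sum>x\<in>UNIV. \<pi> x * Q x y) = \<pi> y * (\<Sum>z\<in>UNIV. Q y z)) \<and>
     (\<forall>x y. \<pi> x * Q x y = \<pi> y * Q y x)"

definition prob_densities :: "('x::finite \<Rightarrow> real) \<Rightarrow> ('x \<Rightarrow> real) set" where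
  "prob_densities \<pi> = {\<rho>. (\<forall>x. \<rho> x \<ge> 0) \<and> (\<Sum>x\<in>UNIV. \<pi> x * \<rho> x) = 1}"

definition inner_pi :: "('x::finite \<Rightarrow> real) \<Rightarrow> ('x \<Rightarrow> real) \<Rightarrow> ('x \<Rightarrow> real) \<Rightarrow> real" where
  "inner_pi \<pi> \<phi> \<psi> = (\<Sum>x\<in>UNIV. \<phi> x * \<psi> x * \<pi> x)"

definition inner_Q :: "('x::finite \<Rightarrow> 'x \<Rightarrow> real) \<Rightarrow> ('x \<Rightarrow> real)
    \<Rightarrow> ('x \<Rightarrow> 'x \<Rightarrow> real) \<Rightarrow> ('x \<Rightarrow> 'x \<Rightarrow> real) \<Rightarrow> real" where
  "inner_Q Q \<pi> \<Phi> \<Psi> = (1/2) * (\<Sum>x\<in>UNIV. \<Sum>y\<in>UNIV. \<Phi> x y * \<Psi> x y * Q x y * \<pi> x)"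

definition dgrad :: "('x \<Rightarrow> real) \<Rightarrow> 'x \<Rightarrow> 'x \<Rightarrow> real" where
  "dgrad \<psi> x y = \<psi> x - \<psi> y"

text \<open>C-infinity on a set S of the plane: all iterated partial derivatives
  (indexed by lists of directions, False = first, True = second coordinate)
  exist at every point of S and are continuous on S.\<close>
definition dir2 :: "bool \<Rightarrow> real \<times> real" where
  "dir2 b = (if b then (0, 1) else (1, 0))"

definition smooth2_on :: "(real \<times> real) set \<Rightarrow> (real \<times> real \<Rightarrow> real) \<Rightarrow> bool" where
  "smooth2_on S f \<longleftrightarrow> (\<exists>D :: bool list \<Rightarrow> real \<times> real \<Rightarrow> real.
      D [] = f \<and>
      (\<forall>l. continuous_on S (D l)) \<and>
      (\<forall>l b p. p \<in> S \<longrightarrow>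
          ((\<lambda>h. D l (p + h *\<^sub>R dir2 b)) has_real_derivative D (b # l) p) (at 0)))"

definition averaging_function :: "(real \<Rightarrow> real \<Rightarrow> real) \<Rightarrow> bool" where
  "averaging_function \<theta> \<longleftrightarrow>
     continuous_on ({0..} \<times> {0..}) (\<lambda>p. \<theta> (fst p) (snd p)) \<and>
     concave_on ({0..} \<times> {0..}) (\<lambda>p. \<theta> (fst p) (snd p)) \<and>
     (\<forall>s\<ge>0. \<forall>t\<ge>0. \<theta> s t \<ge> 0) \<and>
     (\<forall>c\<ge>0. \<forall>s\<ge>0. \<forall>t\<ge>0. \<theta> (c * s) (c * t) = c * \<theta> s t) \<and>
     (\<forall>s\<ge>0. \<forall>t\<ge>0. \<theta> s t = \<theta> t s) \<and>
     smooth2_on ({0<..} \<times> {0<..}) (\<lambda>p. \<theta> (fst p) (snd p)) \<and>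
     (\<forall>s\<ge>0. \<theta> 0 s = 0 \<and> \<theta> s 0 = 0) \<and>
     (\<forall>s\<ge>0. \<theta> s s = s) \<and>
     (\<forall>s>0. \<forall>t>0. \<theta> s t > 0) \<and>
     (\<forall>t\<ge>0. mono_on {0..} (\<lambda>s. \<theta> t s))"

text \<open>theta is extended by -infinity when an argument is negative; hence alpha = infinity there.\<close>
definition alpha :: "(real \<Rightarrow> real \<Rightarrow> real) \<Rightarrow> real \<Rightarrow> real \<Rightarrow> real \<Rightarrow> ennreal" where
  "alpha \<theta> s t m =
     (if min s t < 0 then top
      else if \<theta> s t > 0 then ennreal (m\<^sup>2 / \<theta> s t)
      else if \<theta> s t = 0 \<and> m = 0 then 0
      else top)"

definition action :: "(real \<Rightarrow> real \<Rightarrow> real) \<Rightarrow> ('x::finite \<Rightarrow> 'x \<Rightarrow> real) \<Rightarrow> ('x \<Rightarrow> real)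
    \<Rightarrow> (real \<Rightarrow> 'x \<Rightarrow> real) \<Rightarrow> (real \<Rightarrow> 'x \<Rightarrow> 'x \<Rightarrow> real) \<Rightarrow> ennreal" where
  "action \<theta> Q \<pi> \<rho> m =
     (1/2) * (\<integral>\<^sup>+ t. indicator {0..1} t *
        (\<Sum>x\<in>UNIV. \<Sum>y\<in>UNIV. alpha \<theta> (\<rho> t x) (\<rho> t y) (m t x y) * ennreal (Q x y * \<pi> x)) \<partial>lborel)"

definition measurable_pair :: "(real \<Rightarrow> 'x \<Rightarrow> real) \<Rightarrow> (real \<Rightarrow> 'x \<Rightarrow> 'x \<Rightarrow> real) \<Rightarrow> bool" where
  "measurable_pair \<rho> m \<longleftrightarrow>
     (\<forall>x. (\<lambda>t. \<rho> t x) \<in> borel_measurable lborel) \<and>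
     (\<forall>x y. (\<lambda>t. m t x y) \<in> borel_measurable lborel)"

text \<open>Test functions in C^1([0,1], R^X); the time derivative is the (two-sided) derivative.\<close>
definition test_fun :: "(real \<Rightarrow> 'x \<Rightarrow> real) \<Rightarrow> bool" where
  "test_fun \<phi> \<longleftrightarrow> (\<forall>x. (\<lambda>t. \<phi> t x) C1_differentiable_on {0..1})"

definition CE :: "('x::finite \<Rightarrow> 'x \<Rightarrow> real) \<Rightarrow> ('x \<Rightarrow> real) \<Rightarrow> ('x \<Rightarrow> real) \<Rightarrow> ('x \<Rightarrow> real)
    \<Rightarrow> ((real \<Rightarrow> 'x \<Rightarrow> real) \<times> (real \<Rightarrow> 'x \<Rightarrow> 'x \<Rightarrow> real)) set" where
  "CE Q \<pi> \<rho>A \<rho>B = {(\<rho>, m). measurable_pair \<rho> m \<and>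
     (\<forall>\<phi>. test_fun \<phi> \<longrightarrow>
        (let g = (\<lambda>t. inner_pi \<pi> (\<lambda>x. vector_derivative (\<lambda>s. \<phi> s x) (at t)) (\<rho> t)
                      + inner_Q Q \<pi> (dgrad (\<phi> t)) (m t))
         in set_integrable lborel {0..1} g \<and>
            (LINT t:{0..1}|lborel. g t) = inner_pi \<pi> (\<phi> 1) \<rho>B - inner_pi \<pi> (\<phi> 0) \<rho>A))}"

definition energy :: "(real \<Rightarrow> real \<Rightarrow> real) \<Rightarrow> ('x::finite \<Rightarrow> 'x \<Rightarrow> real) \<Rightarrow> ('x \<Rightarrow> real)
    \<Rightarrow> ('x \<Rightarrow> real) \<Rightarrow> ('x \<Rightarrow> real)
    \<Rightarrow> (real \<Rightarrow> 'x \<Rightarrow> real) \<Rightarrow> (real \<Rightarrow> 'x \<Rightarrow> 'x \<Rightarrow> real) \<Rightarrow> ennreal" where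
  "energy \<theta> Q \<pi> \<rho>A \<rho>B \<rho> m =
     (if (\<rho>, m) \<in> CE Q \<pi> \<rho>A \<rho>B then action \<theta> Q \<pi> \<rho> m else top)"

definition energy_inf :: "(real \<Rightarrow> real \<Rightarrow> real) \<Rightarrow> ('x::finite \<Rightarrow> 'x \<Rightarrow> real) \<Rightarrow> ('x \<Rightarrow> real)
    \<Rightarrow> ('x \<Rightarrow> real) \<Rightarrow> ('x \<Rightarrow> real) \<Rightarrow> ennreal" where
  "energy_inf \<theta> Q \<pi> \<rho>A \<rho>B =
     (INF p \<in> {(\<rho>, m). measurable_pair \<rho> m}. energy \<theta> Q \<pi> \<rho>A \<rho>B (fst p) (snd p))"

definition W :: "(real \<Rightarrow> real \<Rightarrow> real) \<Rightarrow> ('x::finite \<Rightarrow> 'x \<Rightarrow> real) \<Rightarrow> ('x \<Rightarrow> real)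
    \<Rightarrow> ('x \<Rightarrow> real) \<Rightarrow> ('x \<Rightarrow> real) \<Rightarrow> ennreal" where
  "W \<theta> Q \<pi> \<rho>A \<rho>B =
     (if energy_inf \<theta> Q \<pi> \<rho>A \<rho>B = top then top
      else ennreal (sqrt (enn2real (energy_inf \<theta> Q \<pi> \<rho>A \<rho>B))))"

end

theory Submission imports Defs begin

lemma theta_facts:
  assumes "averaging_function \<theta>"
  shows "\<And>s t. s \<ge> 0 \<Longrightarrow> t \<ge> 0 \<Longrightarrow> \<theta> s t \<ge> 0"
    and "\<And>s t. s \<ge> 0 \<Longrightarrow> t \<ge> 0 \<Longrightarrow> \<theta> s t = \<theta> t s"
    and "continuous_on ({0..} \<times> {0..}) (\<lambda>p. \<theta> (fst p) (snd p))"
  using assms unfolding averaging_function_def by auto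

lemma alpha_alt:
  "alpha \<theta> s t m =
     (let th = \<theta> (max s 0) (max t 0) in
     (if min s t < 0 then top
      else if th > 0 then ennreal (m\<^sup>2 / th)
      else if th = 0 \<and> m = 0 then 0
      else top))"
  unfolding alpha_def Let_def by (cases "min s t < 0") auto

lemma alpha_meas:
  assumes "averaging_function \<theta>"
    and f: "f \<in> borel_measurable M" and g: "g \<in> borel_measurable M" and h: "h \<in> borel_measurable M"
  shows "(\<lambda>t. alpha \<theta> (f t) (g t) (h t)) \<in> borel_measurable M"
proof -
  define th2 where "th2 = (\<lambda>p::real\<times>real. \<theta> (max (fst p) 0) (max (snd p) 0))"
  have c: "continuous_on UNIV th2"
  proof -
    have "continuous_on UNIV ((\<lambda>p. \<theta> (fst p) (snd p)) \<circ> (\<lambda>p::real\<times>real. (max (fst p) 0, max (snd p) 0)))"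
      apply (rule continuous_on_compose)
       apply (intro continuous_intros)
      apply (rule continuous_on_subset[OF theta_facts(3)[OF assms(1)]])
      by auto
    then show ?thesis unfolding th2_def o_def by simp
  qed
  have m2: "th2 \<in> borel_measurable borel" using c by (rule borel_measurable_continuous_onI)
  have T: "(\<lambda>t. th2 (f t, g t)) \<in> borel_measurable M"
    using measurable_compose[OF _ m2, of "\<lambda>t. (f t, g t)" M] f g by measurable
  have eq: "(\<lambda>t. alpha \<theta> (f t) (g t) (h t)) = (\<lambda>t. (if min (f t) (g t) < 0 then top
      else if th2 (f t, g t) > 0 then ennreal ((h t)\<^sup>2 / th2 (f t, g t))
      else if th2 (f t, g t) = 0 \<and> h t = 0 then 0
      else top))"
    unfolding alpha_alt th2_def Let_def fst_conv snd_conv by (rule refl)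
  show ?thesis unfolding eq using T f g h by measurable
qed


lemma alpha_sym:
  assumes "averaging_function \<theta>"
  shows "alpha \<theta> t s ((q-p)/2) = alpha \<theta> s t ((p-q)/2)"
proof -
  have "(q-p)^2 = (p-q)^2" by (simp add: power2_commute)
  then show ?thesis using theta_facts(2)[OF assms, of s t]
    unfolding alpha_def by (cases "min s t < 0") (auto simp: min_def power_divide split: if_splits)
qed

lemma alpha_key:
  assumes "averaging_function \<theta>"
  shows "2 * alpha \<theta> s t ((p-q)/2) \<le> alpha \<theta> s t p + alpha \<theta> t s q"
    and "alpha \<theta> s t p + alpha \<theta> t s q \<noteq> top \<Longrightarrow>
         2 * alpha \<theta> s t ((p-q)/2) \<ge> alpha \<theta> s t p + alpha \<theta> t s q \<Longrightarrow> p = -q"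
proof -
  note nn = theta_facts(1)[OF assms] and sy = theta_facts(2)[OF assms]
  have ri: "((p-q)/2)^2 / th * 2 \<le> p^2/th + q^2/th" if "th > 0" for th
  proof -
    have "((p-q)/2)^2 * 2 \<le> p^2 + q^2" using sum_squares_ge_zero[of "p+q" 0]
      by (simp add: power2_eq_square algebra_simps)
    then show ?thesis using that by (simp add: field_simps)
  qed
  have rs: "((p-q)/2)^2 / th * 2 < p^2/th + q^2/th" if "th > 0" "p \<noteq> -q" for th
  proof -
    have "(p+q)^2 > 0" using that(2) by (simp add: add_eq_0_iff)
    then have "((p-q)/2)^2 * 2 < p^2 + q^2"
      by (simp add: power2_eq_square algebra_simps)
    then show ?thesis using that by (simp add: field_simps)
  qed
  show "2 * alpha \<theta> s t ((p-q)/2) \<le> alpha \<theta> s t p + alpha \<theta> t s q"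
  proof (cases "min s t < 0")
    case True then show ?thesis by (simp add: alpha_def min_def split: if_splits)
  next
    case False
    then have st: "s \<ge> 0" "t \<ge> 0" by auto
    have e: "\<theta> t s = \<theta> s t" using sy[OF st] by simp
    show ?thesis
    proof (cases "\<theta> s t > 0")
      case True
      have "2 * ennreal (((p-q)/2)^2 / \<theta> s t) = ennreal (((p-q)/2)^2 / \<theta> s t * 2)"
        using True by (subst ennreal_mult) (auto simp: mult.commute)
      also have "\<dots> \<le> ennreal (p^2/\<theta> s t + q^2/\<theta> s t)"
        using ri[OF True] by (rule ennreal_leI)
      also have "\<dots> = ennreal (p^2/\<theta> s t) + ennreal (q^2/\<theta> s t)"
        using True by (intro ennreal_plus) auto
      finally show ?thesis using False True e by (simp add: alpha_def min.commute)
    next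
      case f2: False
      then have "\<theta> s t = 0" using nn[OF st] by simp
      then show ?thesis using False e by (auto simp add: alpha_def min_def)
    qed
  qed
  assume fin: "alpha \<theta> s t p + alpha \<theta> t s q \<noteq> top"
    and ge: "2 * alpha \<theta> s t ((p-q)/2) \<ge> alpha \<theta> s t p + alpha \<theta> t s q"
  show "p = -q"
  proof (rule ccontr)
    assume pq: "p \<noteq> -q"
    have F: "\<not> min s t < 0" using fin by (auto simp: alpha_def min_def split: if_splits)
    then have st: "s \<ge> 0" "t \<ge> 0" by auto
    have e: "\<theta> t s = \<theta> s t" using sy[OF st] by simp
    show False
    proof (cases "\<theta> s t > 0")
      case True
      have "2 * ennreal (((p-q)/2)^2 / \<theta> s t) = ennreal (((p-q)/2)^2 / \<theta> s t * 2)"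
        using True by (subst ennreal_mult) (auto simp: mult.commute)
      also have "\<dots> < ennreal (p^2/\<theta> s t + q^2/\<theta> s t)"
        using rs[OF True pq] True by (subst ennreal_less_iff) auto
      also have "\<dots> = ennreal (p^2/\<theta> s t) + ennreal (q^2/\<theta> s t)"
        using True by (intro ennreal_plus) auto
      finally show False using ge F True e by (simp add: alpha_def min.commute)
    next
      case f2: False
      then have "\<theta> s t = 0" using nn[OF st] by simp
      then show False using fin F e pq by (auto simp add: alpha_def min_def split: if_splits)
    qed
  qed
qed

lemma innerQ_anti:
  assumes "\<And>x y. \<pi> x * Q x y = \<pi> y * Q y x"
  shows "inner_Q Q \<pi> (dgrad \<phi>) (\<lambda>x y. (M x y - M y x)/2) = inner_Q Q \<pi> (dgrad \<phi>) M"
proof -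
  have sw: "(\<Sum>x\<in>UNIV. \<Sum>y\<in>UNIV. (\<phi> x - \<phi> y) * M y x * Q x y * \<pi> x)
        = (\<Sum>x\<in>UNIV. \<Sum>y\<in>UNIV. - ((\<phi> x - \<phi> y) * M x y * Q x y * \<pi> x))"
  proof -
    have "(\<Sum>x\<in>UNIV. \<Sum>y\<in>UNIV. (\<phi> x - \<phi> y) * M y x * Q x y * \<pi> x)
       = (\<Sum>y\<in>UNIV. \<Sum>x\<in>UNIV. (\<phi> x - \<phi> y) * M y x * Q x y * \<pi> x)"
      by (rule sum.swap)
    also have "\<dots> = (\<Sum>y\<in>UNIV. \<Sum>x\<in>UNIV. - ((\<phi> y - \<phi> x) * M y x * Q y x * \<pi> y))"
      apply (intro sum.cong refl)
      subgoal for y x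
      proof -
        have "- ((\<phi> y - \<phi> x) * M y x * Q y x * \<pi> y) = (\<phi> x - \<phi> y) * M y x * (\<pi> y * Q y x)"
          by (simp add: algebra_simps)
        also have "\<dots> = (\<phi> x - \<phi> y) * M y x * (\<pi> x * Q x y)" using assms[of x y] by simp
        finally show ?thesis by (simp add: algebra_simps)
      qed
      done
    finally show ?thesis .
  qed
  have "(\<Sum>x\<in>UNIV. \<Sum>y\<in>UNIV. dgrad \<phi> x y * ((M x y - M y x)/2) * Q x y * \<pi> x)
     = (1/2) * (\<Sum>x\<in>UNIV. \<Sum>y\<in>UNIV. (\<phi> x - \<phi> y) * M x y * Q x y * \<pi> x)
       - (1/2) * (\<Sum>x\<in>UNIV. \<Sum>y\<in>UNIV. (\<phi> x - \<phi> y) * M y x * Q x y * \<pi> x)"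
    by (simp add: dgrad_def sum_distrib_left sum_subtractf[symmetric] algebra_simps diff_divide_distrib)
  also have "\<dots> = (\<Sum>x\<in>UNIV. \<Sum>y\<in>UNIV. dgrad \<phi> x y * M x y * Q x y * \<pi> x)"
    unfolding sw by (simp add: dgrad_def sum_negf)
  finally show ?thesis unfolding inner_Q_def by simp
qed


lemma sum_termwise_eq:
  fixes u v :: "'a \<Rightarrow> ennreal"
  assumes "finite A" "\<And>j. j \<in> A \<Longrightarrow> u j \<le> v j" "sum v A \<noteq> top" "sum v A \<le> sum u A" "i \<in> A"
  shows "v i \<le> u i"
proof (rule ccontr)
  assume "\<not> v i \<le> u i"
  then have lt: "u i < v i" by simp
  have S: "sum v (A - {i}) \<noteq> top"
    using assms(3) sum_mono2[of A "A - {i}" v] assms(1) by (auto simp: top_unique)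
  have "sum u A = u i + sum u (A - {i})" using assms(1,5) by (simp add: sum.remove)
  also have "\<dots> \<le> u i + sum v (A - {i})" using assms(2) by (intro add_left_mono sum_mono) auto
  also have "\<dots> < v i + sum v (A - {i})"
    using lt S ennreal_add_left_cancel_less[of "sum v (A - {i})" "u i" "v i"] by (simp add: add.commute)
  also have "\<dots> = sum v A" using assms(1,5) by (simp add: sum.remove)
  finally show False using assms(4) by simp
qed

lemma sum_UNIV_prod:
  fixes f :: "'a::finite \<times> 'b::finite \<Rightarrow> 'c::comm_monoid_add"
  shows "sum f UNIV = (\<Sum>x\<in>UNIV. \<Sum>y\<in>UNIV. f (x,y))"
proof -
  have "(\<Sum>x\<in>UNIV. \<Sum>y\<in>UNIV. f (x,y)) = sum (\<lambda>(x,y). f (x,y)) (UNIV \<times> UNIV)"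
    by (rule sum.cartesian_product)
  then show ?thesis by simp
qed

theorem lemma2p4:
  fixes Q :: "'x::finite \<Rightarrow> 'x \<Rightarrow> real" and \<pi> :: "'x \<Rightarrow> real"
    and \<theta> :: "real \<Rightarrow> real \<Rightarrow> real"
    and \<rho>A \<rho>B :: "'x \<Rightarrow> real"
    and \<rho> :: "real \<Rightarrow> 'x \<Rightarrow> real" and m :: "real \<Rightarrow> 'x \<Rightarrow> 'x \<Rightarrow> real"
  assumes "markov_setting Q \<pi>"
    and "averaging_function \<theta>"
    and "\<rho>A \<in> prob_densities \<pi>" and "\<rho>B \<in> prob_densities \<pi>"
    and "W \<theta> Q \<pi> \<rho>A \<rho>B < top"
    and "measurable_pair \<rho> m"
    and "energy \<theta> Q \<pi> \<rho>A \<rho>B \<rho> m = energy_inf \<theta> Q \<pi> \<rho>A \<rho>B"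
    and "energy \<theta> Q \<pi> \<rho>A \<rho>B \<rho> m = (W \<theta> Q \<pi> \<rho>A \<rho>B)\<^sup>2"
  shows "\<forall>x y. Q x y > 0 \<longrightarrow> (AE t in lborel. t \<in> {0..1} \<longrightarrow> m t x y = - m t y x)"
proof (intro allI impI)
  fix x0 y0 assume Q0: "Q x0 y0 > 0"
  have Qnn: "\<And>x y. Q x y \<ge> 0" and pipos: "\<And>x. \<pi> x > 0"
    and rev: "\<And>x y. \<pi> x * Q x y = \<pi> y * Q y x"
    using assms(1) unfolding markov_setting_def by auto
  note th = assms(2)
  define m' where "m' = (\<lambda>t x y. (m t x y - m t y x) / 2)"
  define w where "w = (\<lambda>x y. ennreal (Q x y * \<pi> x))"
  have wsym: "w x y = w y x" for x y using rev[of x y] unfolding w_def by (simp add: mult.commute)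
  define a where "a = (\<lambda>t x y. alpha \<theta> (\<rho> t x) (\<rho> t y) (m t x y))"
  define a' where "a' = (\<lambda>t x y. alpha \<theta> (\<rho> t x) (\<rho> t y) (m' t x y))"
  define F where "F = (\<lambda>t. \<Sum>x\<in>UNIV. \<Sum>y\<in>UNIV. a t x y * w x y)"
  define G where "G = (\<lambda>t. \<Sum>x\<in>UNIV. \<Sum>y\<in>UNIV. a' t x y * w x y)"
  have actF: "action \<theta> Q \<pi> \<rho> m = (1/2) * (\<integral>\<^sup>+ t. indicator {0..1} t * F t \<partial>lborel)"
    unfolding action_def F_def a_def w_def by simp
  have actG: "action \<theta> Q \<pi> \<rho> m' = (1/2) * (\<integral>\<^sup>+ t. indicator {0..1} t * G t \<partial>lborel)"
    unfolding action_def G_def a'_def w_def by simp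
  have Wfin: "W \<theta> Q \<pi> \<rho>A \<rho>B \<noteq> top" using assms(5) by simp
  have Efin: "energy \<theta> Q \<pi> \<rho>A \<rho>B \<rho> m \<noteq> top"
    unfolding assms(8) using Wfin by (simp add: power2_eq_square ennreal_mult_eq_top_iff)
  then have CEm: "(\<rho>, m) \<in> CE Q \<pi> \<rho>A \<rho>B" unfolding energy_def by (auto split: if_splits)
  have Em: "energy \<theta> Q \<pi> \<rho>A \<rho>B \<rho> m = action \<theta> Q \<pi> \<rho> m" using CEm unfolding energy_def by simp
  have mr: "\<And>x. (\<lambda>t. \<rho> t x) \<in> borel_measurable lborel" and mm: "\<And>x y. (\<lambda>t. m t x y) \<in> borel_measurable lborel"
    using assms(6) unfolding measurable_pair_def by auto
  have mm': "\<And>x y. (\<lambda>t. m' t x y) \<in> borel_measurable lborel"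
    unfolding m'_def using mm by measurable
  have mp': "measurable_pair \<rho> m'" unfolding measurable_pair_def using mr mm' by auto
  have ma[measurable]: "\<And>x y. (\<lambda>t. a t x y) \<in> borel_measurable lborel"
    unfolding a_def by (rule alpha_meas[OF th mr mr mm])
  have ma'[measurable]: "\<And>x y. (\<lambda>t. a' t x y) \<in> borel_measurable lborel"
    unfolding a'_def by (rule alpha_meas[OF th mr mr mm'])
  have mF[measurable]: "F \<in> borel_measurable lborel" unfolding F_def by measurable
  have mG[measurable]: "G \<in> borel_measurable lborel" unfolding G_def by measurable
  have CEm': "(\<rho>, m') \<in> CE Q \<pi> \<rho>A \<rho>B"
  proof -
    have eqQ: "\<And>\<phi> t. inner_Q Q \<pi> (dgrad (\<phi> t)) (m' t) = inner_Q Q \<pi> (dgrad (\<phi> t)) (m t)"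
      unfolding m'_def by (rule innerQ_anti[OF rev])
    show ?thesis using CEm mp' unfolding CE_def by (simp add: eqQ)
  qed
  have "action \<theta> Q \<pi> \<rho> m \<le> action \<theta> Q \<pi> \<rho> m'"
  proof -
    have "energy_inf \<theta> Q \<pi> \<rho>A \<rho>B \<le> energy \<theta> Q \<pi> \<rho>A \<rho>B \<rho> m'"
      unfolding energy_inf_def using mp' by (intro INF_lower2[of "(\<rho>, m')"]) auto
    then show ?thesis using CEm' Em assms(7) unfolding energy_def by simp
  qed
  moreover have h0: "(1/2::ennreal) \<noteq> 0" by simp
  moreover have ht: "(1/2::ennreal) \<noteq> top" by (simp add: ennreal_divide_eq_top_iff)
  ultimately have IFG: "(\<integral>\<^sup>+ t. indicator {0..1} t * F t \<partial>lborel) \<le> (\<integral>\<^sup>+ t. indicator {0..1} t * G t \<partial>lborel)"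
    unfolding actF actG using ennreal_mult_le_mult_iff[OF h0 ht] by simp
  have IFfin: "(\<integral>\<^sup>+ t. indicator {0..1} t * F t \<partial>lborel) \<noteq> top"
  proof
    assume "(\<integral>\<^sup>+ t. indicator {0..1} t * F t \<partial>lborel) = top"
    then have "action \<theta> Q \<pi> \<rho> m = top" unfolding actF by (simp add: ennreal_mult_eq_top_iff)
    then show False using Efin Em by simp
  qed
  define u where "u = (\<lambda>t (p::'x\<times>'x). 2 * a' t (fst p) (snd p) * w (fst p) (snd p))"
  define v where "v = (\<lambda>t (p::'x\<times>'x). (a t (fst p) (snd p) + a t (snd p) (fst p)) * w (fst p) (snd p))"
  have uv: "u t p \<le> v t p" for t p
    unfolding u_def v_def a'_def a_def m'_def
    by (intro mult_right_mono alpha_key(1)[OF th]) auto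
  have G2: "2 * G t = sum (u t) UNIV" for t
    unfolding G_def u_def
    by (simp add: sum_UNIV_prod sum_distrib_left mult.assoc)
  have F2: "2 * F t = sum (v t) UNIV" for t
  proof -
    have sw: "(\<Sum>x\<in>UNIV. \<Sum>y\<in>UNIV. a t y x * w x y) = F t"
      unfolding F_def by (subst sum.swap) (intro sum.cong refl, metis wsym)
    have "sum (v t) UNIV = (\<Sum>x\<in>UNIV. \<Sum>y\<in>UNIV. (a t x y + a t y x) * w x y)"
      unfolding v_def by (simp add: sum_UNIV_prod)
    also have "\<dots> = F t + (\<Sum>x\<in>UNIV. \<Sum>y\<in>UNIV. a t y x * w x y)"
      unfolding F_def by (simp add: distrib_right sum.distrib)
    also have "\<dots> = 2 * F t" unfolding sw by (simp add: mult_2)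
    finally show ?thesis by simp
  qed
  have GF: "G t \<le> F t" for t
  proof -
    have "2 * G t \<le> 2 * F t" unfolding G2 F2 by (intro sum_mono uv)
    then show ?thesis by (subst (asm) ennreal_mult_le_mult_iff) auto
  qed
  have dec: "(\<integral>\<^sup>+ t. indicator {0..1} t * F t \<partial>lborel) =
     (\<integral>\<^sup>+ t. indicator {0..1} t * G t \<partial>lborel) + (\<integral>\<^sup>+ t. indicator {0..1} t * (F t - G t) \<partial>lborel)"
  proof -
    have "(\<lambda>t. indicator {0..1} t * F t) = (\<lambda>t. indicator {0..1} t * G t + indicator {0..1} t * (F t - G t))"
      using GF by (auto simp: fun_eq_iff distrib_left[symmetric] add_diff_inverse_ennreal)
    then show ?thesis by (simp add: nn_integral_add)
  qed
  have D0: "(\<integral>\<^sup>+ t. indicator {0..1} t * (F t - G t) \<partial>lborel) = 0"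
  proof -
    have le: "(\<integral>\<^sup>+ t. indicator {0..1} t * G t \<partial>lborel) \<le> (\<integral>\<^sup>+ t. indicator {0..1} t * F t \<partial>lborel)"
      using GF by (intro nn_integral_mono mult_left_mono) auto
    then have eq: "(\<integral>\<^sup>+ t. indicator {0..1} t * G t \<partial>lborel) = (\<integral>\<^sup>+ t. indicator {0..1} t * F t \<partial>lborel)"
      using IFG by (rule antisym)
    have "(\<integral>\<^sup>+ t. indicator {0..1} t * G t \<partial>lborel) + 0 =
          (\<integral>\<^sup>+ t. indicator {0..1} t * G t \<partial>lborel) + (\<integral>\<^sup>+ t. indicator {0..1} t * (F t - G t) \<partial>lborel)"
      using dec eq by simp
    then show ?thesis using IFfin eq by (subst (asm) ennreal_add_left_cancel) auto
  qed
  have AE1: "AE t in lborel. indicator {0..1} t * (F t - G t) = (0::ennreal)"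
    using D0 by (subst (asm) nn_integral_0_iff_AE) auto
  have AE2: "AE t in lborel. indicator {0..1} t * F t \<noteq> (\<infinity>::ennreal)"
    using IFfin by (intro nn_integral_PInf_AE) auto
  show "AE t in lborel. t \<in> {0..1} \<longrightarrow> m t x0 y0 = - m t y0 x0"
    using AE1 AE2
  proof eventually_elim
    case (elim t)
    show ?case
    proof
      assume t: "t \<in> {0..1}"
      have Ft: "F t \<noteq> top" using elim(2) t by simp
      have "F t \<le> G t" using elim(1) t by (auto intro: ennreal_minus_eq_0)
      then have sle: "sum (v t) UNIV \<le> sum (u t) UNIV" unfolding G2[symmetric] F2[symmetric]
        by (simp add: mult_left_mono)
      have sfin: "sum (v t) UNIV \<noteq> top" unfolding F2[symmetric] using Ft
        by (simp add: ennreal_mult_eq_top_iff)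
      have "v t (x0, y0) \<le> u t (x0, y0)"
        by (rule sum_termwise_eq[OF _ _ sfin sle]) (auto simp: uv)
      then have w0: "(a t x0 y0 + a t y0 x0) * w x0 y0 \<le> 2 * a' t x0 y0 * w x0 y0"
        unfolding u_def v_def by simp
      have wpos: "w x0 y0 \<noteq> 0" "w x0 y0 \<noteq> top"
        using Q0 pipos[of x0] unfolding w_def by auto
      have le2: "a t x0 y0 + a t y0 x0 \<le> 2 * a' t x0 y0"
        using w0 wpos ennreal_mult_le_mult_iff[of "w x0 y0" "a t x0 y0 + a t y0 x0" "2 * a' t x0 y0"]
        by (simp add: mult.commute)
      have "v t (x0, y0) \<le> sum (v t) UNIV" by (rule member_le_sum) auto
      then have "v t (x0, y0) \<noteq> top" using sfin by (auto simp: top_unique)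
      then have fin2: "a t x0 y0 + a t y0 x0 \<noteq> top"
        using wpos unfolding v_def by (simp add: ennreal_mult_eq_top_iff)
      show "m t x0 y0 = - m t y0 x0"
        using alpha_key(2)[OF th, of "\<rho> t x0" "\<rho> t y0" "m t x0 y0" "m t y0 x0"] fin2 le2
        unfolding a_def a'_def m'_def by simp
    qed
  qed
qed

end
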